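(* Let $\mathbf{A}\in\mathbb{C}^{M\times N_a}$, $\mathbf{B}\in\mathbb{C}^{M\times N_b}$ have unit-$\ell_2$-norm columns with coherence parameters $\mu_a,\mu_b,\mu_m$. Let $\mathcal{X}\subseteq\{1,\dots,N_a\}$, $|\mathcal{X}|=n_x$, and $\mathcal{E}\subseteq\{1,\dots,N_b\}$, $|\mathcal{E}|=n_e$, and assume $$(1-\mu_a(n_x-1))\,[1-\mu_b(n_e-1)]^+>n_xn_e\mu_m^2 .$$ Then $1-\mu_b(n_e-1)>0$, $\mathbf{B}_{\mathcal{E}}^H\mathbf{B}_{\mathcal{E}}$ is invertible, and with $\mathbf{R}_{\mathcal{E}}=\mathbf{I}_M-\mathbf{B}_{\mathcal{E}}\mathbf{B}_{\mathcal{E}}^\dagger$ the matrix $\mathbf{A}_{\mathcal{X}}^H\mathbf{R}_{\mathcal{E}}\mathbf{A}_{\mathcal{X}}$ is invertible with $$\big\|(\mathbf{A}_{\mathcal{X}}^H\mathbf{R}_{\mathcal{E}}\mathbf{A}_{\mathcal{X}})^{-1}\big\|_2\le\frac{1}{1-\mu_a(n_x-1)-\dfrac{n_xn_e\mu_m^2}{1-\mu_b(n_e-1)}}.$$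
   Context: Coherence parameters: $\mu_a=\max_{k\ne\ell}|\mathbf{a}_k^H\mathbf{a}_\ell|$, $\mu_b=\max_{k\ne\ell}|\mathbf{b}_k^H\mathbf{b}_\ell|$, $\mu_m=\max_{k,\ell}|\mathbf{a}_k^H\mathbf{b}_\ell|$. $[x]^+=\max\{x,0\}$. $\mathbf{M}_{\mathcal{S}}$ is the column submatrix indexed by $\mathcal{S}$; $\mathbf{M}^\dagger=(\mathbf{M}^H\mathbf{M})^{-1}\mathbf{M}^H$; $\|\cdot\|_2$ of a matrix is the spectral norm. *)

theory Defs
  imports "Jordan_Normal_Form.Schur_Decomposition" "Jordan_Normal_Form.DL_Submatrix"
begin

definition vnorm2 :: "complex vec \<Rightarrow> real" where
  "vnorm2 v = sqrt (\<Sum>i<dim_vec v. (cmod (v $ i))\<^sup>2)"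

definition cinner :: "complex vec \<Rightarrow> complex vec \<Rightarrow> complex" where
  "cinner u v = (\<Sum>i<dim_vec u. cnj (u $ i) * v $ i)"

(* spectral norm (operator norm induced by l2); convention: 0 for a matrix with no columns *)
definition spec_norm :: "complex mat \<Rightarrow> real" where
  "spec_norm A = Sup ({0} \<union> {vnorm2 (A *\<^sub>v x) | x. x \<in> carrier_vec (dim_col A) \<and> vnorm2 x = 1})"

definition inv_mat :: "complex mat \<Rightarrow> complex mat" where
  "inv_mat A = (SOME B. B \<in> carrier_mat (dim_row A) (dim_row A) \<and> inverts_mat A B \<and> inverts_mat B A)"

(* Moore-Penrose pseudoinverse for full column rank: (M^H M)^{-1} M^H *)
definition pinv :: "complex mat \<Rightarrow> complex mat" where
  "pinv M = inv_mat (mat_adjoint M * M) * mat_adjoint M"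

(* column submatrix M_S (columns with indices in S, in increasing order) *)
definition colsub :: "complex mat \<Rightarrow> nat set \<Rightarrow> complex mat" where
  "colsub M S = submatrix M UNIV S"

definition coherence :: "complex mat \<Rightarrow> real" where
  "coherence A = Max ({0} \<union> {cmod (cinner (col A k) (col A l)) | k l.
      k < dim_col A \<and> l < dim_col A \<and> k \<noteq> l})"

definition mutual_coherence :: "complex mat \<Rightarrow> complex mat \<Rightarrow> real" where
  "mutual_coherence A B = Max ({0} \<union> {cmod (cinner (col A k) (col B l)) | k l.
      k < dim_col A \<and> l < dim_col B})"

definition pos_part :: "real \<Rightarrow> real" where
  "pos_part x = max x 0"

end

theory Submission imports Defs begin

lemma adj_index: "C \<in> carrier_mat m n \<Longrightarrow> i < n \<Longrightarrow> j < m \<Longrightarrow> mat_adjoint C $$ (i,j) = cnj (C $$ (j,i))"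
  unfolding mat_adjoint_def by (simp add: mat_of_rows_index)

lemma adj_carrier: "C \<in> carrier_mat m n \<Longrightarrow> mat_adjoint C \<in> carrier_mat n m"
  unfolding mat_adjoint_def carrier_mat_def by auto

lemma mv_index: "C \<in> carrier_mat m n \<Longrightarrow> z \<in> carrier_vec n \<Longrightarrow> i < m \<Longrightarrow> (C *\<^sub>v z) $ i = (\<Sum>k<n. C $$ (i,k) * z $ k)"
  by (auto simp: scalar_prod_def lessThan_atLeast0 intro!: sum.cong)

lemma vnorm2_sq: "(vnorm2 v)^2 = (\<Sum>i<dim_vec v. (cmod (v$i))^2)"
proof -
  have "0 \<le> (\<Sum>i<dim_vec v. (cmod (v$i))^2)" 
    apply (rule sum_nonneg)
    apply simp
    done
  then show ?thesis unfolding vnorm2_def by (rule real_sqrt_pow2)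
qed

lemma vnorm2_nonneg: "vnorm2 v \<ge> 0"
  unfolding vnorm2_def by (rule real_sqrt_ge_zero, rule sum_nonneg) simp

lemma cinner_self: "cinner v v = complex_of_real ((vnorm2 v)^2)"
  unfolding cinner_def vnorm2_sq of_real_sum
  by (rule sum.cong) (auto simp: mult.commute, metis complex_norm_square of_real_power)

lemma vnorm2_zero: assumes "z \<in> carrier_vec n" "vnorm2 z = 0" shows "z = 0\<^sub>v n"
proof -
  have "(\<Sum>i<dim_vec z. (cmod (z$i))^2) = 0" using assms(2) vnorm2_sq[of z] by simp
  then have "\<forall>i\<in>{..<dim_vec z}. (cmod (z$i))^2 = 0" by (subst (asm) sum_nonneg_eq_0_iff) auto
  then show ?thesis using assms(1) by (intro eq_vecI) auto
qed

lemma real_cs: fixes a b :: "nat \<Rightarrow> real"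
  shows "(\<Sum>i<n. a i * b i) \<le> sqrt (\<Sum>i<n. (a i)^2) * sqrt (\<Sum>i<n. (b i)^2)"
proof -
  define p where "p = sqrt (\<Sum>i<n. (a i)^2)"
  define q where "q = sqrt (\<Sum>i<n. (b i)^2)"
  have SA: "(\<Sum>i<n. (a i)^2) = p^2" unfolding p_def by (simp add: sum_nonneg)
  have SB: "(\<Sum>i<n. (b i)^2) = q^2" unfolding q_def by (simp add: sum_nonneg)
  have p0: "p \<ge> 0" "q \<ge> 0" unfolding p_def q_def by (auto simp: sum_nonneg)
  show ?thesis
  proof (cases "p = 0 \<or> q = 0")
    case True
    then show ?thesis
    proof
      assume "p = 0"
      then have "(\<Sum>i<n. (a i)^2) = 0" using SA by simp
      then have "\<forall>i\<in>{..<n}. (a i)^2 = 0" by (subst (asm) sum_nonneg_eq_0_iff) auto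
      then show ?thesis using \<open>p = 0\<close> p_def by simp
    next
      assume "q = 0"
      then have "(\<Sum>i<n. (b i)^2) = 0" using SB by simp
      then have "\<forall>i\<in>{..<n}. (b i)^2 = 0" by (subst (asm) sum_nonneg_eq_0_iff) auto
      then show ?thesis using \<open>q = 0\<close> q_def by simp
    qed
  next
    case False
    then have pq: "p * q > 0" using p0 by auto
    have "\<And>i. 2 * (p*q) * (a i * b i) \<le> q^2 * (a i)^2 + p^2 * (b i)^2"
    proof -
      fix i have "0 \<le> (q * a i - p * b i)^2" by simp
      then show "2 * (p*q) * (a i * b i) \<le> q^2 * (a i)^2 + p^2 * (b i)^2"
        by (simp add: power2_eq_square algebra_simps)
    qed
    then have "(\<Sum>i<n. 2 * (p*q) * (a i * b i)) \<le> (\<Sum>i<n. q^2 * (a i)^2 + p^2 * (b i)^2)"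
      by (rule sum_mono)
    also have "\<dots> = q^2 * p^2 + p^2 * q^2"
      by (simp add: sum.distrib sum_distrib_left[symmetric] SA SB)
    also have "\<dots> = 2 * (p*q) * (p*q)" by (simp add: power2_eq_square)
    finally have "2 * (p*q) * (\<Sum>i<n. a i * b i) \<le> 2 * (p*q) * (p*q)"
      by (simp add: sum_distrib_left)
    then have "(\<Sum>i<n. a i * b i) \<le> p * q" using pq by (simp add: mult_le_cancel_left_pos)
    then show ?thesis unfolding p_def q_def .
  qed
qed

lemma sum_sq_le: fixes f :: "nat \<Rightarrow> real" assumes "\<And>i. f i \<ge> 0"
  shows "(\<Sum>i<n. f i)^2 \<le> real n * (\<Sum>i<n. (f i)^2)"
proof -
  have "(\<Sum>i<n. f i * 1) \<le> sqrt (\<Sum>i<n. (f i)^2) * sqrt (\<Sum>i<n. 1^2)" by (rule real_cs)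
  then have "(\<Sum>i<n. f i) \<le> sqrt (\<Sum>i<n. (f i)^2) * sqrt (real n)" by simp
  moreover have "0 \<le> (\<Sum>i<n. f i)" using assms by (simp add: sum_nonneg)
  ultimately have "(\<Sum>i<n. f i)^2 \<le> (sqrt (\<Sum>i<n. (f i)^2) * sqrt (real n))^2"
    by (rule power_mono)
  also have "\<dots> = (\<Sum>i<n. (f i)^2) * real n" by (simp add: power_mult_distrib sum_nonneg)
  finally show ?thesis by (simp add: mult.commute)
qed

lemma cinner_cs: assumes "dim_vec u = dim_vec v" shows "cmod (cinner u v) \<le> vnorm2 u * vnorm2 v"
proof -
  have "cmod (cinner u v) \<le> (\<Sum>i<dim_vec u. cmod (u$i) * cmod (v$i))"
    unfolding cinner_def by (rule order.trans[OF norm_sum]) (simp add: norm_mult)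
  also have "\<dots> \<le> sqrt (\<Sum>i<dim_vec u. (cmod (u$i))^2) * sqrt (\<Sum>i<dim_vec u. (cmod (v$i))^2)"
    by (rule real_cs)
  also have "\<dots> = vnorm2 u * vnorm2 v" unfolding vnorm2_def using assms by simp
  finally show ?thesis .
qed

lemma cinner_sym: "dim_vec u = dim_vec v \<Longrightarrow> cnj (cinner u v) = cinner v u"
  unfolding cinner_def by (simp add: mult.commute)

lemma adj_mv_index: assumes "C \<in> carrier_mat m n" "v \<in> carrier_vec m" "l < n"
  shows "(mat_adjoint C *\<^sub>v v) $ l = cinner (col C l) v"
  using assms by (simp add: mv_index[OF adj_carrier[OF assms(1)] assms(2,3)] adj_index cinner_def)

lemma cinner_mv: assumes "C \<in> carrier_mat m n" "u \<in> carrier_vec m" "z \<in> carrier_vec n"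
  shows "cinner u (C *\<^sub>v z) = (\<Sum>k<n. cinner u (col C k) * z $ k)"
proof -
  have "cinner u (C *\<^sub>v z) = (\<Sum>i<m. cnj (u$i) * (\<Sum>k<n. C $$ (i,k) * z $ k))"
    unfolding cinner_def using assms by (intro sum.cong) (auto simp: mv_index[OF assms(1,3)] simp del: index_mult_mat_vec)
  also have "\<dots> = (\<Sum>k<n. \<Sum>i<m. cnj (u$i) * C $$ (i,k) * z $ k)"
    by (simp add: sum_distrib_left sum.swap[of _ "{..<m}"] mult.assoc)
  also have "\<dots> = (\<Sum>k<n. cinner u (col C k) * z $ k)"
    unfolding cinner_def using assms by (auto simp: sum_distrib_right intro!: sum.cong)
  finally show ?thesis .
qed

lemma adjoint_prop: assumes "C \<in> carrier_mat m n" "v \<in> carrier_vec m" "z \<in> carrier_vec n"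
  shows "cinner (mat_adjoint C *\<^sub>v v) z = cinner v (C *\<^sub>v z)"
proof -
  have "cinner (mat_adjoint C *\<^sub>v v) z = (\<Sum>l<n. cnj (cinner (col C l) v) * z $ l)"
    unfolding cinner_def[of "mat_adjoint C *\<^sub>v v"] using adj_carrier[OF assms(1)] assms
    by (intro sum.cong) (auto simp: adj_mv_index[OF assms(1,2)] simp del: index_mult_mat_vec)
  also have "\<dots> = (\<Sum>l<n. cinner v (col C l) * z $ l)"
    using assms by (auto intro!: sum.cong simp: cinner_sym)
  also have "\<dots> = cinner v (C *\<^sub>v z)" using cinner_mv[OF assms] by simp
  finally show ?thesis .
qed

lemma adjoint_prop2: assumes "C \<in> carrier_mat m n" "v \<in> carrier_vec m" "z \<in> carrier_vec n"
  shows "cinner z (mat_adjoint C *\<^sub>v v) = cinner (C *\<^sub>v z) v"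
proof -
  have "cinner z (mat_adjoint C *\<^sub>v v) = cnj (cinner (mat_adjoint C *\<^sub>v v) z)"
    using adj_carrier[OF assms(1)] assms by (subst cinner_sym) auto
  also have "\<dots> = cnj (cinner v (C *\<^sub>v z))" using adjoint_prop[OF assms] by simp
  also have "\<dots> = cinner (C *\<^sub>v z) v" using assms by (subst cinner_sym) auto
  finally show ?thesis .
qed

lemma cinner_minus: "u \<in> carrier_vec n \<Longrightarrow> v \<in> carrier_vec n \<Longrightarrow> w \<in> carrier_vec n \<Longrightarrow>
   cinner u (v - w) = cinner u v - cinner u w"
  unfolding cinner_def by (simp add: sum_subtractf right_diff_distrib)


lemma sum_if_eq: assumes "finite A" "l \<in> A"
  shows "(\<Sum>k\<in>A. if k = l then a k else b k) = (\<Sum>k\<in>A. b k) + (a l - (b l :: real))"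
proof -
  have "(\<Sum>k\<in>A. if k = l then a k else b k) = (\<Sum>k\<in>A. b k + (if k = l then a k - b k else 0))"
    by (rule sum.cong) auto
  also have "\<dots> = (\<Sum>k\<in>A. b k) + (a l - b l)" using assms by (simp add: sum.distrib)
  finally show ?thesis .
qed

lemma gram_lower:
  assumes C: "C \<in> carrier_mat m n" and unit: "\<And>k. k < n \<Longrightarrow> vnorm2 (col C k) = 1"
    and coh: "\<And>k l. k < n \<Longrightarrow> l < n \<Longrightarrow> k \<noteq> l \<Longrightarrow> cmod (cinner (col C k) (col C l)) \<le> \<mu>"
    and mu: "\<mu> \<ge> 0" and z: "z \<in> carrier_vec n"
  shows "(1 - \<mu> * (real n - 1)) * (vnorm2 z)^2 \<le> (vnorm2 (C *\<^sub>v z))^2"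
proof -
  let ?g = "\<lambda>k l. cinner (col C k) (col C l)"
  define s where "s k = cmod (z $ k)" for k
  define T where "T = (\<Sum>k<n. s k)"
  define S where "S = (\<Sum>k<n. (s k)^2)"
  have S: "(vnorm2 z)^2 = S" unfolding S_def s_def vnorm2_sq using z by simp
  have Cz: "C *\<^sub>v z \<in> carrier_vec m" using C z by simp
  have e1: "cinner (C *\<^sub>v z) (C *\<^sub>v z) = (\<Sum>l<n. cinner (C *\<^sub>v z) (col C l) * z $ l)"
    by (rule cinner_mv[OF C Cz z])
  have e2: "cinner (C *\<^sub>v z) (col C l) = (\<Sum>k<n. ?g k l * cnj (z$k))" if l: "l < n" for l
  proof -
    have cl: "col C l \<in> carrier_vec m" using C l by simp
    have "cinner (C *\<^sub>v z) (col C l) = cnj (cinner (col C l) (C *\<^sub>v z))" using cl Cz by (subst cinner_sym) auto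
    also have "\<dots> = cnj (\<Sum>k<n. ?g l k * z$k)" by (simp add: cinner_mv[OF C cl z])
    also have "\<dots> = (\<Sum>k<n. ?g k l * cnj (z$k))" using C l by (auto simp: cinner_sym intro!: sum.cong)
    finally show ?thesis .
  qed
  have tot: "cinner (C *\<^sub>v z) (C *\<^sub>v z) = (\<Sum>l<n. \<Sum>k<n. ?g k l * cnj (z$k) * z$l)"
    unfolding e1 by (rule sum.cong) (auto simp: e2 sum_distrib_right)
  have bnd: "(if k = l then (s k)^2 else - \<mu> * s k * s l) \<le> Re (?g k l * cnj (z$k) * z$l)"
    if kl: "k < n" "l < n" for k l
  proof (cases "k = l")
    case True
    have "?g k k = 1" using cinner_self[of "col C k"] unit[OF kl(1)] by simp
    then have "?g k l * cnj (z$k) * z$l = complex_of_real ((s k)^2)"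
      using True by (simp add: s_def mult.commute) (metis complex_norm_square of_real_power)
    then show ?thesis using True by simp
  next
    case False
    have "cmod (?g k l * cnj (z$k) * z$l) = cmod (?g k l) * s k * s l" by (simp add: s_def norm_mult)
    also have "\<dots> \<le> \<mu> * s k * s l" using coh[OF kl False] by (simp add: s_def mult_right_mono)
    finally have "- (\<mu> * s k * s l) \<le> Re (?g k l * cnj (z$k) * z$l)"
      using abs_Re_le_cmod[of "?g k l * cnj (z$k) * z$l"] by linarith
    then show ?thesis using False by simp
  qed
  have "(vnorm2 (C *\<^sub>v z))^2 = Re (cinner (C *\<^sub>v z) (C *\<^sub>v z))" using cinner_self[of "C *\<^sub>v z"] by simp
  also have "\<dots> = (\<Sum>l<n. \<Sum>k<n. Re (?g k l * cnj (z$k) * z$l))" unfolding tot by (simp add: Re_sum)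
  also have "\<dots> \<ge> (\<Sum>l<n. \<Sum>k<n. (if k = l then (s k)^2 else - \<mu> * s k * s l))"
    by (intro sum_mono bnd) auto
  also have "(\<Sum>l<n. \<Sum>k<n. (if k = l then (s k)^2 else - \<mu> * s k * s l))
      = (\<Sum>l<n. - \<mu> * s l * T + (1 + \<mu>) * (s l)^2)"
  proof (rule sum.cong)
    fix l assume l: "l \<in> {..<n}"
    have "(\<Sum>k<n. (if k = l then (s k)^2 else - \<mu> * s k * s l)) = (\<Sum>k<n. - \<mu> * s k * s l) + ((s l)^2 - (- \<mu> * s l * s l))"
      by (rule sum_if_eq) (use l in auto)
    also have "(\<Sum>k<n. - \<mu> * s k * s l) = - \<mu> * s l * T" unfolding T_def sum_distrib_left
      by (rule sum.cong) auto
    finally show "(\<Sum>k<n. (if k = l then (s k)^2 else - \<mu> * s k * s l)) = - \<mu> * s l * T + (1 + \<mu>) * (s l)^2"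
      by (simp add: power2_eq_square algebra_simps)
  qed simp
  also have "\<dots> = - \<mu> * T * T + (1 + \<mu>) * S"
    unfolding S_def T_def by (simp add: sum.distrib sum_distrib_left sum_distrib_right mult_ac sum_subtractf sum_negf)
  finally have ge: "- \<mu> * T * T + (1 + \<mu>) * S \<le> (vnorm2 (C *\<^sub>v z))^2" .
  have "T^2 \<le> real n * S" unfolding T_def S_def by (rule sum_sq_le) (simp add: s_def)
  then have "\<mu> * T^2 \<le> \<mu> * (real n * S)" using mu by (rule mult_left_mono)
  then have "(1 - \<mu> * (real n - 1)) * S \<le> - \<mu> * T * T + (1 + \<mu>) * S"
    by (simp add: power2_eq_square algebra_simps)
  with ge S show ?thesis by simp
qed

lemma cross_upper:
  assumes C: "C \<in> carrier_mat m p" and D: "D \<in> carrier_mat m n"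
    and coh: "\<And>l k. l < p \<Longrightarrow> k < n \<Longrightarrow> cmod (cinner (col C l) (col D k)) \<le> \<nu>"
    and x: "x \<in> carrier_vec n"
  shows "(vnorm2 (mat_adjoint C *\<^sub>v (D *\<^sub>v x)))^2 \<le> real p * real n * \<nu>^2 * (vnorm2 x)^2"
proof -
  define T where "T = (\<Sum>k<n. cmod (x$k))"
  define w where "w = mat_adjoint C *\<^sub>v (D *\<^sub>v x)"
  have Dx: "D *\<^sub>v x \<in> carrier_vec m" using D x by simp
  have wd: "dim_vec w = p" unfolding w_def using adj_carrier[OF C] by simp
  have wl: "cmod (w $ l) \<le> \<nu> * T" if l: "l < p" for l
  proof -
    have cl: "col C l \<in> carrier_vec m" using C l by simp
    have "w $ l = (\<Sum>k<n. cinner (col C l) (col D k) * x$k)"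
      unfolding w_def adj_mv_index[OF C Dx l] cinner_mv[OF D cl x] ..
    then have "cmod (w $ l) \<le> (\<Sum>k<n. cmod (cinner (col C l) (col D k)) * cmod (x$k))"
      by (auto intro!: order.trans[OF norm_sum] simp: norm_mult)
    also have "\<dots> \<le> (\<Sum>k<n. \<nu> * cmod (x$k))"
      by (intro sum_mono mult_right_mono coh l) auto
    finally show ?thesis unfolding T_def by (simp add: sum_distrib_left)
  qed
  have "(vnorm2 w)^2 = (\<Sum>l<p. (cmod (w$l))^2)" using vnorm2_sq[of w] wd by simp
  also have "\<dots> \<le> (\<Sum>l<p. (\<nu> * T)^2)"
    by (intro sum_mono power_mono wl) auto
  also have "\<dots> = real p * \<nu>^2 * T^2" by (simp add: power_mult_distrib)
  also have "\<dots> \<le> real p * \<nu>^2 * (real n * (vnorm2 x)^2)"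
  proof -
    have "T^2 \<le> real n * (\<Sum>k<n. (cmod (x$k))^2)" unfolding T_def by (rule sum_sq_le) simp
    also have "(\<Sum>k<n. (cmod (x$k))^2) = (vnorm2 x)^2" using vnorm2_sq[of x] x by simp
    finally show ?thesis by (intro mult_left_mono) auto
  qed
  finally show ?thesis unfolding w_def by (simp add: mult_ac)
qed

lemma inv_exists: assumes G: "G \<in> carrier_mat n n"
  and inj: "\<And>v. v \<in> carrier_vec n \<Longrightarrow> G *\<^sub>v v = 0\<^sub>v n \<Longrightarrow> v = 0\<^sub>v n"
  shows "invertible_mat G \<and> inv_mat G \<in> carrier_mat n n \<and> G * inv_mat G = 1\<^sub>m n \<and> inv_mat G * G = 1\<^sub>m n"
proof -
  have "det G \<noteq> 0" using det_0_iff_vec_prod_zero[OF G] inj by auto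
  from det_non_zero_imp_unit[OF G this, of "()"]
  obtain B where B: "B \<in> carrier_mat n n" "G * B = 1\<^sub>m n" "B * G = 1\<^sub>m n"
    unfolding Units_def ring_mat_def by auto
  have ex: "\<exists>B. B \<in> carrier_mat (dim_row G) (dim_row G) \<and> inverts_mat G B \<and> inverts_mat B G"
    using B G unfolding inverts_mat_def by auto
  from someI_ex[OF ex]
  have "inv_mat G \<in> carrier_mat (dim_row G) (dim_row G) \<and> inverts_mat G (inv_mat G) \<and> inverts_mat (inv_mat G) G"
    unfolding inv_mat_def .
  then show ?thesis using G B unfolding invertible_mat_def inverts_mat_def by auto
qed

lemma colsub_facts:
  assumes A: "A \<in> carrier_mat M Na" and X: "X \<subseteq> {0..<Na}"
  shows "colsub A X \<in> carrier_mat M (card X)"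
    and "\<And>k. k < card X \<Longrightarrow> col (colsub A X) k = col A (pick X k)"
    and "\<And>k. k < card X \<Longrightarrow> pick X k < Na"
    and "\<And>k l. k < card X \<Longrightarrow> l < card X \<Longrightarrow> k \<noteq> l \<Longrightarrow> pick X k \<noteq> pick X l"
proof -
  have cX: "{j. j < dim_col A \<and> j \<in> X} = X" using A X by auto
  have cR: "{i. i < dim_row A \<and> i \<in> UNIV} = {..<M}" using A by auto
  show cs: "colsub A X \<in> carrier_mat M (card X)"
    unfolding colsub_def carrier_mat_def using dim_submatrix[of A UNIV X] cX cR carrier_matD[OF A] by simp
  show pk: "pick X k < Na" if "k < card X" for k
    using pick_in_set[of k X] that X by auto
  show "col (colsub A X) k = col A (pick X k)" if k: "k < card X" for k
  proof (rule eq_vecI)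
    show "dim_vec (col (colsub A X) k) = dim_vec (col A (pick X k))" using cs A by simp
    fix i assume "i < dim_vec (col A (pick X k))"
    then have i: "i < M" using A by simp
    have "col (colsub A X) k $ i = colsub A X $$ (i, k)" using cs i k by simp
    also have "\<dots> = A $$ (pick UNIV i, pick X k)" unfolding colsub_def
      by (rule submatrix_index) (use i k cX cR A in auto)
    also have "\<dots> = col A (pick X k) $ i" using A i pk[OF k] by (simp add: pick_UNIV)
    finally show "col (colsub A X) k $ i = col A (pick X k) $ i" .
  qed
  show "pick X k \<noteq> pick X l" if "k < card X" "l < card X" "k \<noteq> l" for k l
    using pick_mono[of k X l] pick_mono[of l X k] that by (cases "k < l") auto
qed

lemma coh_bound: assumes A: "A \<in> carrier_mat M Na" and "k < Na" "l < Na" "k \<noteq> l"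
  shows "cmod (cinner (col A k) (col A l)) \<le> coherence A"
proof -
  have fin: "finite {cmod (cinner (col A k) (col A l)) | k l. k < dim_col A \<and> l < dim_col A \<and> k \<noteq> l}"
    by (rule finite_subset[of _ "(\<lambda>(k,l). cmod (cinner (col A k) (col A l))) ` ({..<dim_col A} \<times> {..<dim_col A})"]) auto
  show ?thesis unfolding coherence_def using assms fin by (intro Max_ge) auto
qed

lemma coh_nonneg: "coherence A \<ge> 0"
proof -
  have fin: "finite {cmod (cinner (col A k) (col A l)) | k l. k < dim_col A \<and> l < dim_col A \<and> k \<noteq> l}"
    by (rule finite_subset[of _ "(\<lambda>(k,l). cmod (cinner (col A k) (col A l))) ` ({..<dim_col A} \<times> {..<dim_col A})"]) auto
  show ?thesis unfolding coherence_def using fin by (intro Max_ge) auto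
qed

lemma mcoh_bound: assumes A: "A \<in> carrier_mat M Na" and B: "B \<in> carrier_mat M Nb" and "k < Na" "l < Nb"
  shows "cmod (cinner (col A k) (col B l)) \<le> mutual_coherence A B"
proof -
  have fin: "finite {cmod (cinner (col A k) (col B l)) | k l. k < dim_col A \<and> l < dim_col B}"
    by (rule finite_subset[of _ "(\<lambda>(k,l). cmod (cinner (col A k) (col B l))) ` ({..<dim_col A} \<times> {..<dim_col B})"]) auto
  show ?thesis unfolding mutual_coherence_def using assms fin by (intro Max_ge) auto
qed


lemma cinner_zero: "cinner z (0\<^sub>v n) = 0" if "z \<in> carrier_vec n" for z :: "complex vec"
  using that unfolding cinner_def by simp

theorem mainTheorem8:
  fixes A B :: "complex mat" and M Na Nb :: nat and X E :: "nat set"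
  assumes A_dim: "A \<in> carrier_mat M Na"
    and B_dim: "B \<in> carrier_mat M Nb"
    and A_unit: "\<And>k. k < Na \<Longrightarrow> vnorm2 (col A k) = 1"
    and B_unit: "\<And>k. k < Nb \<Longrightarrow> vnorm2 (col B k) = 1"
    and X_sub: "X \<subseteq> {0..<Na}"
    and E_sub: "E \<subseteq> {0..<Nb}"
    and cond: "(1 - coherence A * (real (card X) - 1)) * pos_part (1 - coherence B * (real (card E) - 1))
               > real (card X) * real (card E) * (mutual_coherence A B)\<^sup>2"
  shows "1 - coherence B * (real (card E) - 1) > 0
    \<and> invertible_mat (mat_adjoint (colsub B E) * colsub B E)
    \<and> (let R = 1\<^sub>m M - colsub B E * pinv (colsub B E);
           G = mat_adjoint (colsub A X) * R * colsub A X
       in invertible_mat G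
          \<and> spec_norm (inv_mat G) \<le> 1 / (1 - coherence A * (real (card X) - 1)
               - real (card X) * real (card E) * (mutual_coherence A B)\<^sup>2
                 / (1 - coherence B * (real (card E) - 1))))"
proof -
  define nx where "nx = card X"
  define ne where "ne = card E"
  define AX where "AX = colsub A X"
  define BE where "BE = colsub B E"
  define \<alpha> where "\<alpha> = 1 - coherence A * (real (card X) - 1)"
  define \<beta> where "\<beta> = 1 - coherence B * (real (card E) - 1)"
  define r where "r = real (card X) * real (card E) * (mutual_coherence A B)\<^sup>2"
  define c where "c = \<alpha> - r / \<beta>"
  have AX: "AX \<in> carrier_mat M nx" unfolding AX_def nx_def by (rule colsub_facts(1)[OF A_dim X_sub])
  have BE: "BE \<in> carrier_mat M ne" unfolding BE_def ne_def by (rule colsub_facts(1)[OF B_dim E_sub])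
  have r0: "r \<ge> 0" unfolding r_def by simp
  have pb: "pos_part \<beta> > 0"
  proof (rule ccontr)
    assume "\<not> pos_part \<beta> > 0"
    then have "pos_part \<beta> = 0" unfolding pos_part_def by auto
    then show False using cond r0 unfolding \<alpha>_def[symmetric] \<beta>_def[symmetric] r_def[symmetric] by simp
  qed
  then have hb: "\<beta> > 0" unfolding pos_part_def by auto
  then have "pos_part \<beta> = \<beta>" unfolding pos_part_def by auto
  then have cond': "\<alpha> * \<beta> > r" using cond unfolding \<alpha>_def[symmetric] \<beta>_def[symmetric] r_def[symmetric] by simp
  have ha: "\<alpha> > 0"
  proof (rule ccontr)
    assume "\<not> \<alpha> > 0"
    then have "\<alpha> * \<beta> \<le> 0" using hb by (simp add: mult_nonpos_nonneg)
    then show False using cond' r0 by simp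
  qed
  have hc: "c > 0" unfolding c_def using cond' hb by (simp add: pos_divide_less_eq)
  have gA: "\<alpha> * (vnorm2 x)^2 \<le> (vnorm2 (AX *\<^sub>v x))^2" if x: "x \<in> carrier_vec nx" for x
  proof -
    have "(1 - coherence A * (real nx - 1)) * (vnorm2 x)^2 \<le> (vnorm2 (AX *\<^sub>v x))^2"
    proof (rule gram_lower[OF AX _ _ coh_nonneg x])
      fix k assume k: "k < nx"
      show "vnorm2 (col AX k) = 1" unfolding AX_def
        using colsub_facts(2,3)[OF A_dim X_sub] k A_unit nx_def by simp
    next
      fix k l assume kl: "k < nx" "l < nx" "k \<noteq> l"
      show "cmod (cinner (col AX k) (col AX l)) \<le> coherence A" unfolding AX_def
        using colsub_facts(2,3,4)[OF A_dim X_sub] kl nx_def coh_bound[OF A_dim] by simp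
    qed
    then show ?thesis unfolding \<alpha>_def nx_def .
  qed
  have gB: "\<beta> * (vnorm2 z)^2 \<le> (vnorm2 (BE *\<^sub>v z))^2" if z: "z \<in> carrier_vec ne" for z
  proof -
    have "(1 - coherence B * (real ne - 1)) * (vnorm2 z)^2 \<le> (vnorm2 (BE *\<^sub>v z))^2"
    proof (rule gram_lower[OF BE _ _ coh_nonneg z])
      fix k assume k: "k < ne"
      show "vnorm2 (col BE k) = 1" unfolding BE_def
        using colsub_facts(2,3)[OF B_dim E_sub] k B_unit ne_def by simp
    next
      fix k l assume kl: "k < ne" "l < ne" "k \<noteq> l"
      show "cmod (cinner (col BE k) (col BE l)) \<le> coherence B" unfolding BE_def
        using colsub_facts(2,3,4)[OF B_dim E_sub] kl ne_def coh_bound[OF B_dim] by simp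
    qed
    then show ?thesis unfolding \<beta>_def ne_def .
  qed
  have cr: "(vnorm2 (mat_adjoint BE *\<^sub>v (AX *\<^sub>v x)))^2 \<le> real ne * real nx * (mutual_coherence A B)^2 * (vnorm2 x)^2"
    if x: "x \<in> carrier_vec nx" for x
  proof (rule cross_upper[OF BE AX _ x])
    fix l k assume lk: "l < ne" "k < nx"
    have e: "col BE l = col B (pick E l)" "col AX k = col A (pick X k)"
      using colsub_facts(2)[OF B_dim E_sub] colsub_facts(2)[OF A_dim X_sub] lk ne_def nx_def AX_def BE_def by auto
    have p: "pick E l < Nb" "pick X k < Na"
      using colsub_facts(3)[OF B_dim E_sub] colsub_facts(3)[OF A_dim X_sub] lk ne_def nx_def by auto
    have "cmod (cinner (col B (pick E l)) (col A (pick X k))) = cmod (cinner (col A (pick X k)) (col B (pick E l)))"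
      using A_dim B_dim by (subst cinner_sym[symmetric]) (auto simp: complex_mod_cnj)
    also have "\<dots> \<le> mutual_coherence A B" by (rule mcoh_bound[OF A_dim B_dim p(2) p(1)])
    finally show "cmod (cinner (col BE l) (col AX k)) \<le> mutual_coherence A B" unfolding e .
  qed
  define H where "H = mat_adjoint BE * BE"
  have adjBE: "mat_adjoint BE \<in> carrier_mat ne M" by (rule adj_carrier[OF BE])
  have adjAX: "mat_adjoint AX \<in> carrier_mat nx M" by (rule adj_carrier[OF AX])
  have H: "H \<in> carrier_mat ne ne" unfolding H_def using adjBE BE by simp
  have Hz: "cinner z (H *\<^sub>v z) = complex_of_real ((vnorm2 (BE *\<^sub>v z))^2)" if z: "z \<in> carrier_vec ne" for z
  proof -
    have "H *\<^sub>v z = mat_adjoint BE *\<^sub>v (BE *\<^sub>v z)" unfolding H_def using adjBE BE z by simp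
    then have "cinner z (H *\<^sub>v z) = cinner (BE *\<^sub>v z) (BE *\<^sub>v z)"
      using adjoint_prop2[OF BE _ z, of "BE *\<^sub>v z"] BE z by simp
    then show ?thesis by (simp add: cinner_self)
  qed
  have Hinv: "invertible_mat H \<and> inv_mat H \<in> carrier_mat ne ne \<and> H * inv_mat H = 1\<^sub>m ne \<and> inv_mat H * H = 1\<^sub>m ne"
  proof (rule inv_exists[OF H])
    fix z assume z: "z \<in> carrier_vec ne" and Hz0: "H *\<^sub>v z = 0\<^sub>v ne"
    have "(vnorm2 (BE *\<^sub>v z))^2 = 0" using Hz[OF z] Hz0 cinner_zero[OF z] by simp
    then have "\<beta> * (vnorm2 z)^2 \<le> 0" using gB[OF z] by simp
    then have "(vnorm2 z)^2 \<le> 0" using hb by (simp add: mult_le_0_iff)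
    then have "vnorm2 z = 0" by simp
    then show "z = 0\<^sub>v ne" by (rule vnorm2_zero[OF z])
  qed
  define K where "K = inv_mat H"
  have K: "K \<in> carrier_mat ne ne" and HK: "H * K = 1\<^sub>m ne" using Hinv unfolding K_def by auto
  have Kb: "Re (cinner w (K *\<^sub>v w)) \<le> (vnorm2 w)^2 / \<beta>" if w: "w \<in> carrier_vec ne" for w
  proof -
    define z where "z = K *\<^sub>v w"
    have z: "z \<in> carrier_vec ne" unfolding z_def using K w by simp
    have "H *\<^sub>v z = w" unfolding z_def using H K w HK by (simp flip: assoc_mult_mat_vec)
    then have "cinner w z = cinner (H *\<^sub>v z) z" by simp
    also have "\<dots> = cinner (BE *\<^sub>v z) (BE *\<^sub>v z)"
      unfolding H_def using adjBE BE z adjoint_prop[OF BE _ z, of "BE *\<^sub>v z"] by simp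
    finally have eq: "Re (cinner w z) = (vnorm2 (BE *\<^sub>v z))^2" by (simp add: cinner_self)
    define a where "a = vnorm2 z"
    define b where "b = vnorm2 w"
    define t where "t = Re (cinner w z)"
    have a0: "a \<ge> 0" and b0: "b \<ge> 0" unfolding a_def b_def by (auto simp: vnorm2_nonneg)
    have t1: "\<beta> * a^2 \<le> t" unfolding t_def a_def eq using gB[OF z] .
    have "t \<le> cmod (cinner w z)" unfolding t_def by (rule complex_Re_le_cmod)
    also have "\<dots> \<le> b * a" unfolding a_def b_def using w z by (intro cinner_cs) simp
    finally have t2: "t \<le> b * a" .
    have "\<beta> * t \<le> b * b"
    proof (cases "a = 0")
      case True
      then have "t \<le> 0" using t2 by simp
      then have "\<beta> * t \<le> 0" using hb by (simp add: mult_nonneg_nonpos)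
      moreover have "0 \<le> b * b" by simp
      ultimately show ?thesis by linarith
    next
      case False
      then have "a > 0" using a0 by simp
      have "\<beta> * a * a \<le> b * a" using t1 t2 by (simp add: power2_eq_square mult_ac)
      then have "\<beta> * a \<le> b" using \<open>a > 0\<close> by simp
      have "\<beta> * t \<le> \<beta> * (b * a)" using t2 hb by simp
      also have "\<dots> = b * (\<beta> * a)" by simp
      also have "\<dots> \<le> b * b" using \<open>\<beta> * a \<le> b\<close> b0 by (rule mult_left_mono)
      finally show ?thesis .
    qed
    then have "t \<le> b^2 / \<beta>" using hb by (simp add: pos_le_divide_eq power2_eq_square mult.commute)
    then show ?thesis unfolding t_def b_def z_def .
  qed
  have pinvBE: "pinv BE = K * mat_adjoint BE" unfolding pinv_def K_def H_def ..
  define R where "R = 1\<^sub>m M - BE * pinv BE"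
  define G where "G = mat_adjoint AX * R * AX"
  have P: "BE * pinv BE \<in> carrier_mat M M" unfolding pinvBE using BE K adjBE by simp
  have R: "R \<in> carrier_mat M M" unfolding R_def using P by (rule minus_carrier_mat)
  have G: "G \<in> carrier_mat nx nx" unfolding G_def using adjAX R AX by simp
  have Gf: "c * (vnorm2 x)^2 \<le> Re (cinner x (G *\<^sub>v x))" if x: "x \<in> carrier_vec nx" for x
  proof -
    define u where "u = AX *\<^sub>v x"
    define w where "w = mat_adjoint BE *\<^sub>v u"
    have u: "u \<in> carrier_vec M" unfolding u_def using AX x by simp
    have w: "w \<in> carrier_vec ne" unfolding w_def using adjBE u by simp
    have Kw: "K *\<^sub>v w \<in> carrier_vec ne" using K w by simp
    have Gx: "G *\<^sub>v x = mat_adjoint AX *\<^sub>v (R *\<^sub>v u)"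
    proof -
      have "G *\<^sub>v x = (mat_adjoint AX * R) *\<^sub>v (AX *\<^sub>v x)" unfolding G_def
        by (rule assoc_mult_mat_vec[OF mult_carrier_mat[OF adjAX R] AX x])
      also have "\<dots> = mat_adjoint AX *\<^sub>v (R *\<^sub>v (AX *\<^sub>v x))"
        by (rule assoc_mult_mat_vec[OF adjAX R]) (use AX x in simp)
      finally show ?thesis unfolding u_def .
    qed
    have Ru: "R *\<^sub>v u = u - BE *\<^sub>v (K *\<^sub>v w)"
    proof -
      have "R *\<^sub>v u = u - (BE * pinv BE) *\<^sub>v u" unfolding R_def
        using minus_mult_distrib_mat_vec[OF one_carrier_mat P u] u by simp
      also have "(BE * pinv BE) *\<^sub>v u = BE *\<^sub>v (K *\<^sub>v w)"
      proof -
        have "(BE * (K * mat_adjoint BE)) *\<^sub>v u = BE *\<^sub>v ((K * mat_adjoint BE) *\<^sub>v u)"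
          by (rule assoc_mult_mat_vec[OF BE mult_carrier_mat[OF K adjBE] u])
        also have "(K * mat_adjoint BE) *\<^sub>v u = K *\<^sub>v w"
          unfolding w_def by (rule assoc_mult_mat_vec[OF K adjBE u])
        finally show ?thesis unfolding pinvBE .
      qed
      finally show ?thesis .
    qed
    have "cinner x (G *\<^sub>v x) = cinner u (R *\<^sub>v u)"
      unfolding Gx u_def by (rule adjoint_prop2[OF AX _ x]) (use R u u_def in simp)
    also have "\<dots> = cinner u u - cinner u (BE *\<^sub>v (K *\<^sub>v w))"
      unfolding Ru by (rule cinner_minus[OF u u]) (use BE Kw in simp)
    also have "cinner u (BE *\<^sub>v (K *\<^sub>v w)) = cinner w (K *\<^sub>v w)"
      unfolding w_def by (rule adjoint_prop[OF BE u Kw[unfolded w_def], symmetric])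
    finally have "Re (cinner x (G *\<^sub>v x)) = (vnorm2 u)^2 - Re (cinner w (K *\<^sub>v w))"
      by (simp add: cinner_self)
    moreover have "\<alpha> * (vnorm2 x)^2 \<le> (vnorm2 u)^2" unfolding u_def by (rule gA[OF x])
    moreover have "Re (cinner w (K *\<^sub>v w)) \<le> r * (vnorm2 x)^2 / \<beta>"
    proof -
      have "Re (cinner w (K *\<^sub>v w)) \<le> (vnorm2 w)^2 / \<beta>" by (rule Kb[OF w])
      also have "\<dots> \<le> (real ne * real nx * (mutual_coherence A B)^2 * (vnorm2 x)^2) / \<beta>"
        using cr[OF x] hb unfolding w_def u_def by (simp add: divide_right_mono)
      also have "\<dots> = r * (vnorm2 x)^2 / \<beta>" unfolding r_def nx_def ne_def by (simp add: mult_ac)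
      finally show ?thesis .
    qed
    moreover have "c * (vnorm2 x)^2 = \<alpha> * (vnorm2 x)^2 - r * (vnorm2 x)^2 / \<beta>"
      unfolding c_def by (simp add: algebra_simps)
    ultimately show ?thesis by linarith
  qed
  have Ginv: "invertible_mat G \<and> inv_mat G \<in> carrier_mat nx nx \<and> G * inv_mat G = 1\<^sub>m nx \<and> inv_mat G * G = 1\<^sub>m nx"
  proof (rule inv_exists[OF G])
    fix x assume x: "x \<in> carrier_vec nx" and Gx0: "G *\<^sub>v x = 0\<^sub>v nx"
    have "c * (vnorm2 x)^2 \<le> 0" using Gf[OF x] Gx0 cinner_zero[OF x] by simp
    then have "(vnorm2 x)^2 \<le> 0" using hc by (simp add: mult_le_0_iff)
    then have "vnorm2 x = 0" by simp
    then show "x = 0\<^sub>v nx" by (rule vnorm2_zero[OF x])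
  qed
  define Gi where "Gi = inv_mat G"
  have Gi: "Gi \<in> carrier_mat nx nx" and GGi: "G * Gi = 1\<^sub>m nx" using Ginv unfolding Gi_def by auto
  have nb: "vnorm2 (Gi *\<^sub>v y) \<le> 1 / c" if y: "y \<in> carrier_vec nx" "vnorm2 y = 1" for y
  proof -
    define x where "x = Gi *\<^sub>v y"
    have x: "x \<in> carrier_vec nx" unfolding x_def using Gi y by simp
    have "G *\<^sub>v x = y" unfolding x_def using G Gi y GGi by (simp flip: assoc_mult_mat_vec)
    then have "c * (vnorm2 x)^2 \<le> Re (cinner x y)" using Gf[OF x] by simp
    also have "\<dots> \<le> cmod (cinner x y)" by (rule complex_Re_le_cmod)
    also have "\<dots> \<le> vnorm2 x * vnorm2 y" using x y by (intro cinner_cs) simp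
    finally have h: "c * vnorm2 x * vnorm2 x \<le> vnorm2 x" using y by (simp add: power2_eq_square mult_ac)
    have "c * vnorm2 x \<le> 1"
    proof (cases "vnorm2 x = 0")
      case True then show ?thesis by simp
    next
      case False then have "vnorm2 x > 0" using vnorm2_nonneg[of x] by simp
      then show ?thesis using h by (simp add: mult_le_cancel_right_pos mult.commute)
    qed
    then show ?thesis unfolding x_def using hc by (simp add: pos_le_divide_eq mult.commute)
  qed
  have sn: "spec_norm Gi \<le> 1 / c"
    unfolding spec_norm_def
  proof (rule cSup_least)
    show "{0} \<union> {vnorm2 (Gi *\<^sub>v x) |x. x \<in> carrier_vec (dim_col Gi) \<and> vnorm2 x = 1} \<noteq> {}" by simp
    fix t assume "t \<in> {0} \<union> {vnorm2 (Gi *\<^sub>v x) |x. x \<in> carrier_vec (dim_col Gi) \<and> vnorm2 x = 1}"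
    then show "t \<le> 1 / c" using nb Gi hc by auto
  qed
  have fin1: "1 - coherence B * (real (card E) - 1) > 0" using hb unfolding \<beta>_def .
  have fin2: "invertible_mat (mat_adjoint (colsub B E) * colsub B E)" using Hinv unfolding H_def BE_def by simp
  have fin3: "invertible_mat G" using Ginv by simp
  have fin4: "spec_norm (inv_mat G) \<le> 1 / (1 - coherence A * (real (card X) - 1)
               - real (card X) * real (card E) * (mutual_coherence A B)\<^sup>2
                 / (1 - coherence B * (real (card E) - 1)))"
    using sn unfolding Gi_def c_def \<alpha>_def \<beta>_def r_def .
  show ?thesis using fin1 fin2 fin3 fin4 unfolding Let_def G_def R_def AX_def BE_def by simp
qed

end
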